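(* Let $d\ge1$, $K\ge2$, $n\ge1$ be such that no Softmax Code in $\mathrm{OB}(d,K)$ has a rattler and no solution of the Tammes problem in $\mathrm{OB}(d,K)$ has a rattler. Then the following are equivalent: (a) every optimal solution $(\mathbf W^\star,\mathbf H^\star)$ of $\min_{\mathbf W\in\mathrm{OB}(d,K),\mathbf H\in\mathrm{OB}(d,nK)}\mathcal L_{\mathrm{HardMax}}(\mathbf W,\mathbf H)$ satisfies $\mathbf h_{k,i}^\star=\mathbf w_k^\star$ for all $i\in[n]$, $k\in[K]$; (b) $\operatorname{argmax}_{\mathbf W\in\mathrm{OB}(d,K)}\rho_{\text{one-vs-rest}}(\mathbf W)=\operatorname{argmax}_{\mathbf W\in\mathrm{OB}(d,K)}\rho_{\text{one-vs-one}}(\mathbf W)$.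
   Context: $\mathrm{OB}(d,m)$ is the set of real $d\times m$ matrices with unit-norm columns; $\mathbf W$ has columns $\mathbf w_k$, $\mathbf H$ has columns $\mathbf h_{k,i}$. $\mathcal L_{\mathrm{HardMax}}(\mathbf W,\mathbf H)=\max_k\max_i\max_{k'\ne k}\langle\mathbf w_{k'}-\mathbf w_k,\mathbf h_{k,i}\rangle$. $\operatorname{dist}(\mathbf v,\mathcal W)=\inf\{\|\mathbf v-\mathbf w\|_2:\mathbf w\in\operatorname{conv}(\mathcal W)\}$. $\rho_{\text{one-vs-rest}}(\mathbf W)=\min_k\operatorname{dist}(\mathbf w_k,\{\mathbf w_j\}_{j\ne k})$; a Softmax Code is a maximizer of it over $\mathrm{OB}(d,K)$, and a rattler of it is an index $k$ with $\operatorname{dist}(\mathbf w_k,\{\mathbf w_j\}_{j\ne k})\ne\rho_{\text{one-vs-rest}}(\mathbf W)$. $\rho_{\text{one-vs-one}}(\mathbf W)=\min_k\min_{k'\ne k}\|\mathbf w_k-\mathbf w_{k'}\|_2$; the Tammes problem is maximizing $\rho_{\text{one-vs-one}}$ over $\mathrm{OB}(d,K)$, and a rattler of a Tammes solution $\mathbf W$ is an index $k$ with $\min_{k'\ne k}\|\mathbf w_k-\mathbf w_{k'}\|_2\ne\rho_{\text{one-vs-one}}(\mathbf W)$. *)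

theory Defs
  imports "HOL-Analysis.Analysis"
begin

text \<open>Vectors in R^d are elements of real^'d (d = CARD('d) >= 1).
  A matrix in OB(d,K) is represented by its column map W :: nat => real^'d,
  columns indexed by k < K; outside the index range the map is fixed to 0
  (extensional representation, so that sets of matrices compare correctly).
  A matrix H in OB(d,nK) is represented by H :: nat => nat => real^'d with
  column h_{k,i} = H k i for k < K, i < n.\<close>

definition OB :: "nat \<Rightarrow> (nat \<Rightarrow> real^'d) set" where
  "OB K = {W. (\<forall>k<K. norm (W k) = 1) \<and> (\<forall>k. K \<le> k \<longrightarrow> W k = 0)}"

definition OB2 :: "nat \<Rightarrow> nat \<Rightarrow> (nat \<Rightarrow> nat \<Rightarrow> real^'d) set" where
  "OB2 K n = {H. (\<forall>k<K. \<forall>i<n. norm (H k i) = 1) \<and>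
                 (\<forall>k i. \<not> (k < K \<and> i < n) \<longrightarrow> H k i = 0)}"

definition L_HardMax :: "nat \<Rightarrow> nat \<Rightarrow> (nat \<Rightarrow> real^'d) \<Rightarrow> (nat \<Rightarrow> nat \<Rightarrow> real^'d) \<Rightarrow> real" where
  "L_HardMax K n W H =
     Max {inner (W k' - W k) (H k i) | k i k'. k < K \<and> i < n \<and> k' < K \<and> k' \<noteq> k}"

definition dist_conv :: "real^'d \<Rightarrow> (real^'d) set \<Rightarrow> real" where
  "dist_conv v S = Inf ((\<lambda>w. norm (v - w)) ` (convex hull S))"

definition ovr_dist :: "nat \<Rightarrow> (nat \<Rightarrow> real^'d) \<Rightarrow> nat \<Rightarrow> real" where
  "ovr_dist K W k = dist_conv (W k) (W ` ({..<K} - {k}))"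

definition rho_ovr :: "nat \<Rightarrow> (nat \<Rightarrow> real^'d) \<Rightarrow> real" where
  "rho_ovr K W = Min (ovr_dist K W ` {..<K})"

definition ovo_dist :: "nat \<Rightarrow> (nat \<Rightarrow> real^'d) \<Rightarrow> nat \<Rightarrow> real" where
  "ovo_dist K W k = Min ((\<lambda>k'. norm (W k - W k')) ` ({..<K} - {k}))"

definition rho_ovo :: "nat \<Rightarrow> (nat \<Rightarrow> real^'d) \<Rightarrow> real" where
  "rho_ovo K W = Min (ovo_dist K W ` {..<K})"

definition argmax_on :: "'a set \<Rightarrow> ('a \<Rightarrow> real) \<Rightarrow> 'a set" where
  "argmax_on S f = {x \<in> S. \<forall>y\<in>S. f y \<le> f x}"

definition softmax_code :: "nat \<Rightarrow> (nat \<Rightarrow> real^'d) \<Rightarrow> bool" where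
  "softmax_code K W \<longleftrightarrow> W \<in> argmax_on (OB K) (rho_ovr K)"

definition tammes_solution :: "nat \<Rightarrow> (nat \<Rightarrow> real^'d) \<Rightarrow> bool" where
  "tammes_solution K W \<longleftrightarrow> W \<in> argmax_on (OB K) (rho_ovo K)"

definition ovr_rattler :: "nat \<Rightarrow> (nat \<Rightarrow> real^'d) \<Rightarrow> nat \<Rightarrow> bool" where
  "ovr_rattler K W k \<longleftrightarrow> k < K \<and> ovr_dist K W k \<noteq> rho_ovr K W"

definition ovo_rattler :: "nat \<Rightarrow> (nat \<Rightarrow> real^'d) \<Rightarrow> nat \<Rightarrow> bool" where
  "ovo_rattler K W k \<longleftrightarrow> k < K \<and> ovo_dist K W k \<noteq> rho_ovo K W"

end

theory Submission
  imports Defs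
begin

lemma I_ne: "(2::nat) \<le> K \<Longrightarrow> ({..<K} - {k}) \<noteq> {}"
proof -
  assume "2 \<le> K"
  then show ?thesis
  proof (cases "k = 0")
    case True then have "1 \<in> {..<K} - {k}" using \<open>2 \<le> K\<close> by auto
    then show ?thesis by blast
  next
    case False then have "0 \<in> {..<K} - {k}" using \<open>2 \<le> K\<close> by auto
    then show ?thesis by blast
  qed
qed

lemma hull_ne: "(2::nat) \<le> K \<Longrightarrow> convex hull (W ` ({..<K} - {k})) \<noteq> {}"
  using I_ne by auto

lemma hull_compact:
  fixes W :: "nat \<Rightarrow> real^'d"
  shows "compact (convex hull (W ` ({..<K} - {k::nat})))"
  by (rule finite_imp_compact_convex_hull) auto

lemma ovr_attain:
  fixes W :: "nat \<Rightarrow> real^'d"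
  assumes "(2::nat) \<le> K"
  obtains p where "p \<in> convex hull (W ` ({..<K}-{k}))" "ovr_dist K W k = norm (W k - p)"
    "\<And>x. x \<in> convex hull (W ` ({..<K}-{k})) \<Longrightarrow> norm (W k - p) \<le> norm (W k - x)"
proof -
  let ?C = "convex hull (W ` ({..<K}-{k}))"
  obtain p where p: "p \<in> ?C" "\<And>y. y\<in>?C \<Longrightarrow> dist (W k) p \<le> dist (W k) y"
    using distance_attains_inf[of ?C "W k"] compact_imp_closed[OF hull_compact] hull_ne[OF assms]
    by metis
  have "ovr_dist K W k = norm (W k - p)" unfolding ovr_dist_def dist_conv_def
    apply (rule cInf_eq_minimum) using p by (auto simp: dist_norm)
  then show ?thesis using that p by (auto simp: dist_norm)
qed

lemma ovr_le:
  fixes W :: "nat \<Rightarrow> real^'d"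
  shows "(2::nat) \<le> K \<Longrightarrow> x \<in> convex hull (W ` ({..<K}-{k})) \<Longrightarrow> ovr_dist K W k \<le> norm (W k - x)"
  by (metis ovr_attain)

lemma ovr_ge:
  fixes W :: "nat \<Rightarrow> real^'d"
  shows "(2::nat) \<le> K \<Longrightarrow> (\<And>x. x \<in> convex hull (W ` ({..<K}-{k})) \<Longrightarrow> b \<le> norm (W k - x)) \<Longrightarrow> b \<le> ovr_dist K W k"
  by (metis ovr_attain)

lemma ovr_nonneg:
  fixes W :: "nat \<Rightarrow> real^'d"
  shows "(2::nat) \<le> K \<Longrightarrow> 0 \<le> ovr_dist K W k"
  by (rule ovr_ge) auto

lemma hull_halfspace:
  fixes G :: "(real^'d) set"
  assumes "\<And>g. g \<in> G \<Longrightarrow> inner g a \<le> M" "x \<in> convex hull G"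
  shows "inner x a \<le> M"
proof -
  have "convex hull G \<subseteq> {x. inner a x \<le> M}"
    by (rule hull_minimal) (use assms(1) convex_halfspace_le[of a M] in \<open>auto simp: inner_commute\<close>)
  then show ?thesis using assms(2) by (auto simp: inner_commute)
qed

lemma rho_ovr_le: "k < K \<Longrightarrow> rho_ovr K W \<le> ovr_dist K W k"
  unfolding rho_ovr_def by (rule Min_le) auto

lemma rho_ovr_attain: "0 < K \<Longrightarrow> \<exists>k<K. rho_ovr K W = ovr_dist K W k"
proof -
  assume "0 < K"
  then have "Min (ovr_dist K W ` {..<K}) \<in> ovr_dist K W ` {..<K}" by (intro Min_in) auto
  then show ?thesis unfolding rho_ovr_def by auto
qed

lemma rho_ovr_nonneg:
  fixes W :: "nat \<Rightarrow> real^'d"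
  shows "(2::nat) \<le> K \<Longrightarrow> 0 \<le> rho_ovr K W"
  using rho_ovr_attain[of K W] ovr_nonneg[of K W] by fastforce

lemma ovo_le: "k < K \<Longrightarrow> j < K \<Longrightarrow> j \<noteq> k \<Longrightarrow> ovo_dist K W k \<le> norm (W k - W j)"
  unfolding ovo_dist_def by (rule Min_le) auto

lemma ovo_attain: "(2::nat) \<le> K \<Longrightarrow> \<exists>j<K. j \<noteq> k \<and> ovo_dist K W k = norm (W k - W j)"
proof -
  assume "2 \<le> K"
  then have "Min ((\<lambda>k'. norm (W k - W k')) ` ({..<K} - {k})) \<in> (\<lambda>k'. norm (W k - W k')) ` ({..<K} - {k})"
    using I_ne[of K k] by (intro Min_in) auto
  then show ?thesis unfolding ovo_dist_def by auto
qed

lemma rho_ovo_le: "k < K \<Longrightarrow> rho_ovo K W \<le> ovo_dist K W k"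
  unfolding rho_ovo_def by (rule Min_le) auto

lemma rho_ovo_attain: "0 < K \<Longrightarrow> \<exists>k<K. rho_ovo K W = ovo_dist K W k"
proof -
  assume "0 < K"
  then have "Min (ovo_dist K W ` {..<K}) \<in> ovo_dist K W ` {..<K}" by (intro Min_in) auto
  then show ?thesis unfolding rho_ovo_def by auto
qed

lemma rho_ovo_nonneg: "(2::nat) \<le> K \<Longrightarrow> 0 \<le> rho_ovo K W"
proof -
  assume "2 \<le> K"
  then obtain k where "k < K" "rho_ovo K W = ovo_dist K W k" using rho_ovo_attain[of K W] by auto
  moreover obtain j where "ovo_dist K W k = norm (W k - W j)" using ovo_attain[OF \<open>2 \<le> K\<close>, of k W] by auto
  ultimately show ?thesis by simp
qed

lemma L_set_finite: "finite {inner (W k' - W k) (H k i) | k i k'. k < (K::nat) \<and> i < (n::nat) \<and> k' < K \<and> k' \<noteq> k}"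
  by (rule finite_subset[where B = "(\<lambda>(k,i,k'). inner (W k' - W k) (H k i)) ` ({..<K}\<times>{..<n}\<times>{..<K})"]) (force, simp)

lemma L_ge: "k < K \<Longrightarrow> i < n \<Longrightarrow> k' < K \<Longrightarrow> k' \<noteq> k \<Longrightarrow> inner (W k' - W k) (H k i) \<le> L_HardMax K n W H"
  unfolding L_HardMax_def by (rule Max_ge[OF L_set_finite]) blast

lemma L_le:
  assumes "(2::nat) \<le> K" "1 \<le> n" "\<And>k i k'. k < K \<Longrightarrow> i < n \<Longrightarrow> k' < K \<Longrightarrow> k' \<noteq> k \<Longrightarrow> inner (W k' - W k) (H k i) \<le> M"
  shows "L_HardMax K n W H \<le> M"
  unfolding L_HardMax_def
proof (rule Max.boundedI[OF L_set_finite])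
  have "inner (W 1 - W 0) (H 0 0) \<in> {inner (W k' - W k) (H k i) | k i k'. k < K \<and> i < n \<and> k' < K \<and> k' \<noteq> k}"
    using assms(1,2) by force
  then show "{inner (W k' - W k) (H k i) | k i k'. k < K \<and> i < n \<and> k' < K \<and> k' \<noteq> k} \<noteq> {}"
    by blast
qed (use assms(3) in auto)

lemma nd: "norm (a - b)^2 = norm a ^2 + norm b ^2 - 2 * inner a (b::real^'d)"
  by (simp add: power2_norm_eq_inner inner_diff_left inner_diff_right inner_commute)


lemma LB:
  fixes W :: "nat \<Rightarrow> real^'d"
  assumes K2: "2 \<le> K" and "1 \<le> n" "H \<in> OB2 K n" "k < K"
  shows "- ovr_dist K W k \<le> L_HardMax K n W H"
proof -
  let ?h = "H k 0" let ?M = "L_HardMax K n W H"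
  have h1: "norm ?h = 1" using assms unfolding OB2_def by auto
  obtain p where p: "p \<in> convex hull (W ` ({..<K}-{k}))" "ovr_dist K W k = norm (W k - p)"
    using ovr_attain[OF K2] by metis
  have "inner p ?h \<le> ?M + inner (W k) ?h"
  proof (rule hull_halfspace[OF _ p(1)])
    fix g assume "g \<in> W ` ({..<K}-{k})"
    then obtain j where j: "j<K" "j\<noteq>k" "g = W j" by auto
    have "inner (W j - W k) ?h \<le> ?M" using L_ge[of k K 0 n j W H] j assms by auto
    then show "inner g ?h \<le> ?M + inner (W k) ?h" using j by (simp add: inner_diff_left)
  qed
  moreover have "inner (W k - p) ?h \<le> norm (W k - p)"
    using norm_cauchy_schwarz[of "W k - p" ?h] h1 by simp
  ultimately show ?thesis using p(2) by (simp add: inner_diff_left)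
qed

lemma LB':
  fixes W :: "nat \<Rightarrow> real^'d"
  assumes "2 \<le> K" and "1 \<le> n" "H \<in> OB2 K n"
  shows "- rho_ovr K W \<le> L_HardMax K n W H"
proof -
  obtain k where "k < K" "rho_ovr K W = ovr_dist K W k" using rho_ovr_attain[of K W] assms(1) by auto
  then show ?thesis using LB[OF assms, of k W] by simp
qed

lemma UB:
  fixes W :: "nat \<Rightarrow> real^'d"
  assumes K2: "2 \<le> K" and n1: "1 \<le> n" and pos: "\<forall>k<K. 0 < ovr_dist K W k"
  obtains P H where
    "\<forall>k<K. P k \<in> convex hull (W ` ({..<K}-{k})) \<and> norm (W k - P k) = ovr_dist K W k \<and>
        (\<forall>x \<in> convex hull (W ` ({..<K}-{k})). inner (W k - P k) (x - P k) \<le> 0)"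
    "H \<in> OB2 K n" "L_HardMax K n W H \<le> - rho_ovr K W" "\<forall>k<K. \<forall>i<n. H k i = sgn (W k - P k)"
proof -
  have "\<forall>k. \<exists>p. k < K \<longrightarrow> (p \<in> convex hull (W ` ({..<K}-{k})) \<and> norm (W k - p) = ovr_dist K W k \<and>
        (\<forall>x \<in> convex hull (W ` ({..<K}-{k})). inner (W k - p) (x - p) \<le> 0))"
  proof
    fix k
    let ?C = "convex hull (W ` ({..<K}-{k}))"
    obtain p where p: "p \<in> ?C" "ovr_dist K W k = norm (W k - p)"
      "\<And>x. x \<in> ?C \<Longrightarrow> norm (W k - p) \<le> norm (W k - x)"
      using ovr_attain[OF K2] by metis
    have "\<forall>x \<in> ?C. inner (W k - p) (x - p) \<le> 0"
    proof
      fix x assume "x \<in> ?C"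
      show "inner (W k - p) (x - p) \<le> 0"
        by (rule any_closest_point_dot[OF convex_convex_hull compact_imp_closed[OF hull_compact] p(1) \<open>x \<in> ?C\<close>])
           (use p(3) in \<open>auto simp: dist_norm\<close>)
    qed
    then show "\<exists>p. k < K \<longrightarrow> (p \<in> ?C \<and> norm (W k - p) = ovr_dist K W k \<and> (\<forall>x \<in> ?C. inner (W k - p) (x - p) \<le> 0))"
      using p by auto
  qed
  then obtain P where P: "\<forall>k<K. P k \<in> convex hull (W ` ({..<K}-{k})) \<and> norm (W k - P k) = ovr_dist K W k \<and>
        (\<forall>x \<in> convex hull (W ` ({..<K}-{k})). inner (W k - P k) (x - P k) \<le> 0)"
    by metis
  define H where "H = (\<lambda>k i. if k < K \<and> i < n then sgn (W k - P k) else 0)"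
  have nz: "W k - P k \<noteq> 0" if "k < K" for k
    using P pos that by force
  have "H \<in> OB2 K n" unfolding OB2_def H_def using nz by (auto simp: norm_sgn)
  moreover have "L_HardMax K n W H \<le> - rho_ovr K W"
  proof (rule L_le[OF K2 n1])
    fix k i k' assume ki: "k < K" "i < n" "k' < K" "k' \<noteq> k"
    define u where "u = W k - P k"
    have Hk: "H k i = sgn u" using ki by (simp add: H_def u_def)
    have "W k' \<in> convex hull (W ` ({..<K}-{k}))" using ki by (intro hull_inc) auto
    then have "inner u (W k' - P k) \<le> 0" using P ki unfolding u_def by blast
    then have "inner (W k' - W k) u \<le> - ((norm u)^2)"
      unfolding u_def by (simp add: inner_diff_left inner_diff_right inner_commute power2_norm_eq_inner)
    then have "inner (W k' - W k) u / norm u \<le> - ((norm u)^2) / norm u"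
      by (intro divide_right_mono) auto
    also have "\<dots> = - norm u" by (simp add: power2_eq_square)
    also have "\<dots> = - ovr_dist K W k" using P ki unfolding u_def by auto
    also have "\<dots> \<le> - rho_ovr K W" using rho_ovr_le[OF ki(1)] by simp
    finally show "inner (W k' - W k) (H k i) \<le> - rho_ovr K W"
      by (simp add: Hk sgn_div_norm inner_commute divide_inverse mult.commute)
  qed
  moreover have "\<forall>k<K. \<forall>i<n. H k i = sgn (W k - P k)" by (simp add: H_def)
  ultimately show ?thesis using that P by blast
qed

lemma ovr_ge_ovo:
  fixes W :: "nat \<Rightarrow> real^'d"
  assumes K2: "2 \<le> K" and W: "W \<in> OB K" and k: "k < K"
  shows "(ovo_dist K W k)^2 / 2 \<le> ovr_dist K W k"
proof (rule ovr_ge[OF K2])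
  let ?d = "ovo_dist K W k"
  have d0: "0 \<le> ?d" using ovo_attain[OF K2, of k W] by auto
  have wk: "norm (W k) = 1" using W k by (auto simp: OB_def)
  fix x assume x: "x \<in> convex hull (W ` ({..<K}-{k}))"
  have "inner x (W k) \<le> 1 - ?d^2/2"
  proof (rule hull_halfspace[OF _ x])
    fix g assume "g \<in> W ` ({..<K}-{k})"
    then obtain j where j: "j<K" "j\<noteq>k" "g = W j" by auto
    have wj: "norm (W j) = 1" using W j by (auto simp: OB_def)
    have "?d \<le> norm (W k - W j)" using ovo_le[OF k j(1,2)] .
    then have "?d^2 \<le> (norm (W k - W j))^2" using d0 by (intro power_mono) auto
    also have "\<dots> = 2 - 2 * inner (W k) (W j)" using nd[of "W k" "W j"] wk wj by simp
    finally show "inner g (W k) \<le> 1 - ?d^2/2" using j by (simp add: inner_commute)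
  qed
  moreover have "inner (W k - x) (W k) \<le> norm (W k - x)"
    using norm_cauchy_schwarz[of "W k - x" "W k"] wk by simp
  moreover have "inner (W k) (W k) = 1" using wk by (simp add: power2_norm_eq_inner[symmetric])
  ultimately show "?d^2/2 \<le> norm (W k - x)" by (simp add: inner_diff_left)
qed

lemma R:
  fixes W :: "nat \<Rightarrow> real^'d"
  assumes K2: "2 \<le> K" and W: "W \<in> OB K"
  shows "(rho_ovo K W)^2 \<le> 2 * rho_ovr K W"
proof -
  obtain k where k: "k < K" "rho_ovr K W = ovr_dist K W k" using rho_ovr_attain[of K W] K2 by auto
  have "rho_ovo K W \<le> ovo_dist K W k" using rho_ovo_le[OF k(1)] .
  then have "(rho_ovo K W)^2 \<le> (ovo_dist K W k)^2" using rho_ovo_nonneg[OF K2] by (intro power_mono) auto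
  then show ?thesis using ovr_ge_ovo[OF K2 W k(1)] k(2) by simp
qed

lemma pos:
  fixes W :: "nat \<Rightarrow> real^'d"
  assumes K2: "2 \<le> K"
    and h3: "\<forall>W :: nat \<Rightarrow> real^'d. softmax_code K W \<longrightarrow> (\<forall>k. \<not> ovr_rattler K W k)"
    and S: "W \<in> argmax_on (OB K) (rho_ovr K)"
  shows "0 < rho_ovr K W"
proof (rule ccontr)
  assume "\<not> 0 < rho_ovr K W"
  then have r0: "rho_ovr K W \<le> 0" by simp
  obtain e :: "real^'d" where e: "norm e = 1" using vector_choose_size[of 1] by auto
  define V where "V = (\<lambda>j. if j < K - 1 then e else if j = K - 1 then -e else (0::real^'d))"
  have VOB: "V \<in> OB K" unfolding OB_def V_def using e K2 by auto
  have le: "rho_ovr K V \<le> 0" using S VOB r0 unfolding argmax_on_def by fastforce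
  have V0: "rho_ovr K V = 0" using le rho_ovr_nonneg[OF K2, of V] by simp
  have VS: "softmax_code K V" unfolding softmax_code_def argmax_on_def
    using VOB S r0 V0 unfolding argmax_on_def by fastforce
  have img: "V ` ({..<K} - {K-1}) = {e}"
  proof
    show "V ` ({..<K} - {K-1}) \<subseteq> {e}" by (auto simp: V_def)
    have "0 \<in> {..<K} - {K-1}" "V 0 = e" using K2 by (auto simp: V_def)
    then show "{e} \<subseteq> V ` ({..<K} - {K-1})" by (metis empty_subsetI image_eqI insert_subset)
  qed
  have "ovr_dist K V (K-1) = norm (-e - e)"
    unfolding ovr_dist_def dist_conv_def img using K2 by (simp add: V_def)
  also have "\<dots> = norm ((-2::real) *\<^sub>R e)" by (simp add: scaleR_2)
  also have "\<dots> = 2" using e by simp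
  finally have "ovr_rattler K V (K-1)" unfolding ovr_rattler_def using V0 K2 by simp
  then show False using h3 VS by blast
qed


lemma hull_rep:
  fixes W :: "nat \<Rightarrow> real^'d"
  assumes fin: "finite I" and p: "p \<in> convex hull (W ` I)"
  shows "\<exists>lam. (\<forall>j\<in>I. 0 \<le> lam j) \<and> sum lam I = 1 \<and> p = (\<Sum>j\<in>I. lam j *\<^sub>R W j)"
proof -
  let ?Q = "{y. \<exists>lam. (\<forall>j\<in>I. 0 \<le> lam j) \<and> sum lam I = 1 \<and> y = (\<Sum>j\<in>I. lam j *\<^sub>R W j)}"
  have "convex hull (W ` I) \<subseteq> ?Q"
  proof (rule hull_minimal)
    show "W ` I \<subseteq> ?Q"
    proof
      fix y assume "y \<in> W ` I"
      then obtain i where i: "i \<in> I" "y = W i" by auto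
      have "(\<Sum>j\<in>I. (if j = i then 1 else 0) *\<^sub>R W j) = (\<Sum>j\<in>I. if j = i then W j else 0)"
        by (rule sum.cong) auto
      also have "\<dots> = W i" using fin i(1) by (simp add: sum.delta)
      finally have "(\<Sum>j\<in>I. (if j = i then 1 else 0) *\<^sub>R W j) = W i" .
      moreover have "sum (\<lambda>j. if j = i then 1 else (0::real)) I = 1" using fin i(1) by simp
      moreover have "\<forall>j\<in>I. 0 \<le> (if j = i then 1 else (0::real))" by simp
      ultimately show "y \<in> ?Q" unfolding i(2)
        by (intro CollectI exI[of _ "\<lambda>j. if j = i then 1 else (0::real)"] conjI) (assumption | rule sym)+
    qed
    show "convex ?Q" unfolding convex_def
    proof (intro ballI allI impI)
      fix x y :: "real^'d" and u v :: real
      assume x: "x \<in> ?Q" and y: "y \<in> ?Q" and uv: "0 \<le> u" "0 \<le> v" "u + v = 1"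
      obtain a where a: "\<forall>j\<in>I. 0 \<le> a j" "sum a I = 1" "x = (\<Sum>j\<in>I. a j *\<^sub>R W j)" using x by auto
      obtain b where b: "\<forall>j\<in>I. 0 \<le> b j" "sum b I = 1" "y = (\<Sum>j\<in>I. b j *\<^sub>R W j)" using y by auto
      have ux: "u *\<^sub>R x = (\<Sum>j\<in>I. (u * a j) *\<^sub>R W j)" by (simp add: a(3) scaleR_sum_right)
      have vy: "v *\<^sub>R y = (\<Sum>j\<in>I. (v * b j) *\<^sub>R W j)" by (simp add: b(3) scaleR_sum_right)
      have "u *\<^sub>R x + v *\<^sub>R y = (\<Sum>j\<in>I. (u * a j + v * b j) *\<^sub>R W j)"
        unfolding ux vy by (simp only: scaleR_add_left sum.distrib)
      moreover have "sum (\<lambda>j. u * a j + v * b j) I = 1"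
      proof -
        have "sum (\<lambda>j. u * a j + v * b j) I = u * sum a I + v * sum b I"
          by (simp only: sum.distrib sum_distrib_left)
        then show ?thesis using a(2) b(2) uv by simp
      qed
      moreover have "\<forall>j\<in>I. 0 \<le> u * a j + v * b j" using a(1) b(1) uv by auto
      ultimately show "u *\<^sub>R x + v *\<^sub>R y \<in> ?Q"
        by (intro CollectI exI[of _ "\<lambda>j. u * a j + v * b j"] conjI) (assumption | rule sym)+
    qed
  qed
  then show ?thesis using p by blast
qed

lemma subseq_fin:
  fixes X :: "nat \<Rightarrow> nat \<Rightarrow> real^'d"
  shows "(\<forall>m. \<forall>k<N. norm (X m k) = 1) \<Longrightarrow> \<exists>r l. strict_mono r \<and> (\<forall>k<N. (\<lambda>m. X (r m) k) \<longlonglongrightarrow> l k)"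
proof (induction N)
  case 0
  show ?case by (rule exI[of _ id]) (auto simp: strict_mono_def)
next
  case (Suc N)
  have "\<forall>m. \<forall>k<N. norm (X m k) = 1" using Suc.prems by auto
  then have "\<exists>r l. strict_mono r \<and> (\<forall>k<N. (\<lambda>m. X (r m) k) \<longlonglongrightarrow> l k)" by (rule Suc.IH)
  then obtain r l where rl: "strict_mono r" "\<forall>k<N. (\<lambda>m. X (r m) k) \<longlonglongrightarrow> l k" by blast
  have "compact (sphere (0::real^'d) 1)" by simp
  then have "seq_compact (sphere (0::real^'d) 1)" by (rule compact_imp_seq_compact)
  moreover have "\<forall>m. X (r m) N \<in> sphere 0 1" using Suc.prems by auto
  ultimately obtain a r' where a: "strict_mono r'" "((\<lambda>m. X (r m) N) \<circ> r') \<longlonglongrightarrow> a"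
    unfolding seq_compact_def by metis
  have "strict_mono (r \<circ> r')" using rl(1) a(1) by (rule strict_mono_o)
  moreover have "\<forall>k<Suc N. (\<lambda>m. X ((r \<circ> r') m) k) \<longlonglongrightarrow> (l(N := a)) k"
  proof (intro allI impI)
    fix k assume "k < Suc N"
    show "(\<lambda>m. X ((r \<circ> r') m) k) \<longlonglongrightarrow> (l(N := a)) k"
    proof (cases "k = N")
      case True then show ?thesis using a(2) by (simp add: o_def)
    next
      case False
      then have "k < N" using \<open>k < Suc N\<close> by simp
      then have "((\<lambda>m. X (r m) k) \<circ> r') \<longlonglongrightarrow> l k" using rl(2) a(1) by (intro LIMSEQ_subseq_LIMSEQ) auto
      then show ?thesis using False by (simp add: o_def)
    qed
  qed
  ultimately show ?case by blast
qed


lemma exists_S: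
  assumes K2: "2 \<le> K"
  shows "\<exists>W :: nat \<Rightarrow> real^'d. W \<in> argmax_on (OB K) (rho_ovr K)"
proof -
  obtain e :: "real^'d" where e: "norm e = 1" using vector_choose_size[of 1] by auto
  define V where "V = (\<lambda>j. if j < K then e else (0::real^'d))"
  have VOB: "V \<in> OB K" unfolding OB_def V_def using e by auto
  have bnd: "rho_ovr K W \<le> 2" if "W \<in> OB K" for W :: "nat \<Rightarrow> real^'d"
  proof -
    have "rho_ovr K W \<le> ovr_dist K W 0" using rho_ovr_le[of 0 K W] K2 by simp
    also have "\<dots> \<le> norm (W 0 - W 1)"
      by (rule ovr_le[OF K2], rule hull_inc) (use K2 in auto)
    also have "\<dots> \<le> norm (W 0) + norm (W 1)" by (rule norm_triangle_ineq4)
    also have "\<dots> = 2" using that K2 by (auto simp: OB_def)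
    finally show ?thesis .
  qed
  define s where "s = Sup (rho_ovr K ` (OB K :: (nat \<Rightarrow> real^'d) set))"
  have bdd: "bdd_above (rho_ovr K ` (OB K :: (nat \<Rightarrow> real^'d) set))"
    using bnd by (intro bdd_aboveI[of _ 2]) auto
  have ne: "rho_ovr K ` (OB K :: (nat \<Rightarrow> real^'d) set) \<noteq> {}" using VOB by auto
  have upper: "rho_ovr K W \<le> s" if "W \<in> OB K" for W :: "nat \<Rightarrow> real^'d"
    unfolding s_def using bdd that by (intro cSup_upper) auto
  have "\<forall>m. \<exists>W :: nat \<Rightarrow> real^'d. W \<in> OB K \<and> s - inverse (real (Suc m)) < rho_ovr K W"
  proof
    fix m
    have "s - inverse (real (Suc m)) < s" by simp
    then obtain y where "y \<in> rho_ovr K ` (OB K :: (nat \<Rightarrow> real^'d) set)" "s - inverse (real (Suc m)) < y"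
      unfolding s_def using less_cSupE[OF _ ne] by metis
    then show "\<exists>W :: nat \<Rightarrow> real^'d. W \<in> OB K \<and> s - inverse (real (Suc m)) < rho_ovr K W" by auto
  qed
  then obtain X :: "nat \<Rightarrow> nat \<Rightarrow> real^'d" where X: "\<forall>m. X m \<in> OB K \<and> s - inverse (real (Suc m)) < rho_ovr K (X m)"
    by metis
  have "\<forall>m. \<forall>k<K. norm (X m k) = 1" using X by (auto simp: OB_def)
  then obtain r l where rl: "strict_mono r" "\<forall>k<K. (\<lambda>m. X (r m) k) \<longlonglongrightarrow> l k"
    using subseq_fin[of K X] by blast
  define W where "W = (\<lambda>k. if k < K then l k else (0::real^'d))"
  have WOB: "W \<in> OB K" unfolding OB_def
  proof (safe)
    fix k assume k: "k < K"
    have "(\<lambda>m. norm (X (r m) k)) \<longlonglongrightarrow> norm (l k)" using rl(2) k by (intro tendsto_norm) auto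
    moreover have "(\<lambda>m. norm (X (r m) k)) = (\<lambda>m. 1)" using X k by (auto simp: OB_def)
    ultimately have "norm (l k) = 1" using LIMSEQ_unique[OF _ tendsto_const] by metis
    then show "norm (W k) = 1" using k by (simp add: W_def)
  qed (simp add: W_def)
  obtain k0 where k0: "k0 < K" "rho_ovr K W = ovr_dist K W k0" using rho_ovr_attain[of K W] K2 by auto
  let ?I = "{..<K} - {k0}"
  obtain p where p: "p \<in> convex hull (W ` ?I)" "ovr_dist K W k0 = norm (W k0 - p)"
    using ovr_attain[OF K2] by metis
  obtain lam where lam: "\<forall>j\<in>?I. 0 \<le> lam j" "sum lam ?I = 1" "p = (\<Sum>j\<in>?I. lam j *\<^sub>R W j)"
    using hull_rep[OF _ p(1)] by blast
  define q where "q m = (\<Sum>j\<in>?I. lam j *\<^sub>R X (r m) j)" for m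
  have q_in: "q m \<in> convex hull (X (r m) ` ?I)" for m
    unfolding q_def by (rule convex_sum) (use lam in \<open>auto intro: hull_inc\<close>)
  have le: "s - inverse (real (Suc m)) \<le> norm (X (r m) k0 - q m)" for m
  proof -
    have "m \<le> r m" using rl(1) by (rule seq_suble)
    then have "inverse (real (Suc (r m))) \<le> inverse (real (Suc m))"
      by (intro le_imp_inverse_le) auto
    then have "s - inverse (real (Suc m)) \<le> s - inverse (real (Suc (r m)))" by simp
    also have "\<dots> < rho_ovr K (X (r m))" using X by auto
    also have "\<dots> \<le> ovr_dist K (X (r m)) k0" using rho_ovr_le[OF k0(1)] .
    also have "\<dots> \<le> norm (X (r m) k0 - q m)" by (rule ovr_le[OF K2 q_in])
    finally show ?thesis by simp
  qed
  have lim1: "(\<lambda>m. s - inverse (real (Suc m))) \<longlonglongrightarrow> s"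
    using tendsto_diff[OF tendsto_const LIMSEQ_inverse_real_of_nat, of s] by simp
  have "(\<lambda>m. X (r m) k0 - q m) \<longlonglongrightarrow> l k0 - (\<Sum>j\<in>?I. lam j *\<^sub>R l j)"
    unfolding q_def by (intro tendsto_intros) (use rl k0 in auto)
  moreover have "l k0 - (\<Sum>j\<in>?I. lam j *\<^sub>R l j) = W k0 - p"
    unfolding lam(3) W_def using k0 by (auto intro!: sum.cong)
  ultimately have lim2: "(\<lambda>m. norm (X (r m) k0 - q m)) \<longlonglongrightarrow> norm (W k0 - p)"
    by (metis tendsto_norm)
  have "s \<le> norm (W k0 - p)" using LIMSEQ_le[OF lim1 lim2] le by blast
  then have "s \<le> rho_ovr K W" using k0 p by simp
  then show ?thesis using WOB upper unfolding argmax_on_def by force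
qed


lemma tammes_key:
  fixes W :: "nat \<Rightarrow> real^'d"
  assumes K2: "2 \<le> K" and T: "W \<in> argmax_on (OB K) (rho_ovo K)"
    and h4: "\<forall>W :: nat \<Rightarrow> real^'d. tammes_solution K W \<longrightarrow> (\<forall>k. \<not> ovo_rattler K W k)"
    and k: "k < K"
  shows "(1 - (ovo_dist K W k)^2 / 2) *\<^sub>R W k \<in> convex hull (W ` ({..<K} - {k}))"
proof (rule ccontr)
  let ?I = "{..<K} - {k}"
  let ?C = "convex hull (W ` ?I)"
  define d where "d = ovo_dist K W k"
  define c where "c = 1 - d^2/2"
  assume "\<not> ?thesis"
  then have nc: "c *\<^sub>R W k \<notin> ?C" by (simp add: c_def d_def)
  have WOB: "W \<in> OB K" using T by (simp add: argmax_on_def)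
  have wn: "norm (W j) = 1" if "j < K" for j using WOB that by (simp add: OB_def)
  have wkk: "inner (W k) (W k) = 1" using wn[OF k] by (simp add: power2_norm_eq_inner[symmetric])
  have "tammes_solution K W" using T by (simp add: tammes_solution_def)
  then have "\<not> ovo_rattler K W k" using h4 by blast
  then have drho: "d = rho_ovo K W" using k by (simp add: ovo_rattler_def d_def)
  have d0: "0 \<le> d" using drho rho_ovo_nonneg[OF K2] by simp
  have inner_eq: "inner (W j) (W k) = 1 - (norm (W k - W j))^2/2" if "j \<in> ?I" for j
    using nd[of "W k" "W j"] wn[OF k] wn[of j] that by (simp add: inner_commute field_simps)
  have inner_le: "inner (W j) (W k) \<le> c" if "j \<in> ?I" for j
  proof -
    have "d \<le> norm (W k - W j)" unfolding d_def using that k by (intro ovo_le) auto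
    then have "d^2 \<le> (norm (W k - W j))^2" using d0 by (intro power_mono) auto
    then show ?thesis using inner_eq[OF that] by (simp add: c_def)
  qed
  obtain j0 where j0: "j0 < K" "j0 \<noteq> k" "d = norm (W k - W j0)"
    using ovo_attain[OF K2, of k W] by (auto simp: d_def)
  have j0c: "inner (W j0) (W k) = c" using inner_eq[of j0] j0 by (simp add: c_def)
  obtain q where q: "q \<in> ?C" "\<And>y. y \<in> ?C \<Longrightarrow> dist (c *\<^sub>R W k) q \<le> dist (c *\<^sub>R W k) y"
    using distance_attains_inf[of ?C "c *\<^sub>R W k"] compact_imp_closed[OF hull_compact] hull_ne[OF K2]
    by metis
  define u where "u = c *\<^sub>R W k - q"
  have u0: "u \<noteq> 0" using q(1) nc by (auto simp: u_def)
  have proj: "inner u (x - q) \<le> 0" if "x \<in> ?C" for x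
    unfolding u_def
    by (rule any_closest_point_dot[OF convex_convex_hull compact_imp_closed[OF hull_compact] q(1) that])
       (use q(2) in auto)
  define v where "v = u - inner u (W k) *\<^sub>R W k"
  have vk: "inner (W k) v = 0" unfolding v_def using wkk by (simp add: inner_diff_right inner_commute)
  have contact: "inner (W j) v < 0" if j: "j \<in> ?I" "inner (W j) (W k) = c" for j
  proof -
    have "W j \<in> ?C" using j by (intro hull_inc) auto
    then have "inner u (W j - q) \<le> 0" by (rule proj)
    then have a: "inner (W j) u \<le> inner q u" by (simp add: inner_diff_right inner_commute)
    have "q = c *\<^sub>R W k - u" by (simp add: u_def)
    then have b: "inner q u = c * inner (W k) u - inner u u" by (simp add: inner_diff_left)
    have "inner (W j) v = inner (W j) u - inner u (W k) * inner (W j) (W k)"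
      by (simp add: v_def inner_diff_right)
    also have "\<dots> = inner (W j) u - c * inner (W k) u" using j(2) by (simp add: inner_commute)
    also have "\<dots> \<le> - inner u u" using a b by simp
    also have "\<dots> < 0" using u0 by simp
    finally show ?thesis .
  qed
  have v0: "v \<noteq> 0" using contact[of j0] j0 j0c by auto
  define e where "e = sgn v"
  have ne: "norm e = 1" using v0 by (simp add: e_def norm_sgn)
  have ek: "inner (W k) e = 0" using vk by (simp add: e_def sgn_div_norm)
  have econt: "inner (W j) e < 0" if "j \<in> ?I" "inner (W j) (W k) = c" for j
  proof -
    have "inner (W j) e = inner (W j) v / norm v" by (simp add: e_def sgn_div_norm divide_inverse mult.commute)
    then show ?thesis using contact[OF that] v0 by (simp add: divide_neg_pos)
  qed
  define g where "g j t = cos t * inner (W j) (W k) + sin t * inner (W j) e" for j t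
  have ev: "\<forall>j\<in>?I. eventually (\<lambda>t. g j t < c) (at_right 0)"
  proof
    fix j assume j: "j \<in> ?I"
    show "eventually (\<lambda>t. g j t < c) (at_right 0)"
    proof (cases "inner (W j) (W k) = c")
      case True
      have "DERIV (g j) 0 :> inner (W j) e" unfolding g_def
        by (auto intro!: derivative_eq_intros)
      then obtain dd where dd: "dd > 0" "\<forall>h>0. h < dd \<longrightarrow> g j (0 + h) < g j 0"
        using DERIV_neg_dec_right econt[OF j True] by blast
      have "g j 0 = c" using True by (simp add: g_def)
      then show ?thesis unfolding eventually_at_right_field using dd by auto
    next
      case False
      then have lt: "inner (W j) (W k) < c" using inner_le[OF j] by simp
      have "((g j) \<longlongrightarrow> g j 0) (at_right 0)" unfolding g_def
        by (intro tendsto_intros)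
      moreover have "g j 0 < c" using lt by (simp add: g_def)
      ultimately show ?thesis by (rule order_tendstoD(2))
    qed
  qed
  then have "eventually (\<lambda>t. \<forall>j\<in>?I. g j t < c) (at_right 0)"
    by (intro eventually_ball_finite) auto
  then obtain b where b: "b > 0" "\<forall>y>0. y < b \<longrightarrow> (\<forall>j\<in>?I. g j y < c)"
    unfolding eventually_at_right_field by auto
  define t where "t = b / 2"
  have t: "\<forall>j\<in>?I. g j t < c" using b by (simp add: t_def)
  define w' where "w' = cos t *\<^sub>R W k + sin t *\<^sub>R e"
  define W' where "W' = W(k := w')"
  have "inner w' w' = (cos t)^2 * inner (W k) (W k) + (sin t)^2 * inner e e + 2 * cos t * sin t * inner (W k) e"
    unfolding w'_def by (simp add: inner_add_left inner_add_right inner_commute power2_eq_square algebra_simps)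
  also have "\<dots> = 1" using wkk ek ne by (simp add: power2_norm_eq_inner[symmetric])
  finally have nw': "norm w' = 1" by (simp add: norm_eq_sqrt_inner)
  have W'OB: "W' \<in> OB K" unfolding OB_def W'_def using WOB nw' k by (auto simp: OB_def)
  have far: "d < norm (w' - W j)" if j: "j \<in> ?I" for j
  proof -
    have "inner (W j) w' = g j t" by (simp add: w'_def g_def inner_add_right)
    then have "inner (W j) w' < c" using t j by simp
    moreover have "(norm (w' - W j))^2 = 2 - 2 * inner w' (W j)"
      using nd[of w' "W j"] nw' wn[of j] j by simp
    ultimately have "d^2 < (norm (w' - W j))^2" by (simp add: c_def inner_commute)
    then show ?thesis by (rule power_less_imp_less_base) simp
  qed
  have rho': "d \<le> rho_ovo K W'"
  proof -
    obtain k1 where k1: "k1 < K" "rho_ovo K W' = ovo_dist K W' k1" using rho_ovo_attain[of K W'] K2 by auto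
    obtain j1 where j1: "j1 < K" "j1 \<noteq> k1" "ovo_dist K W' k1 = norm (W' k1 - W' j1)"
      using ovo_attain[OF K2, of k1 W'] by auto
    consider "k1 = k" | "j1 = k" | "k1 \<noteq> k" "j1 \<noteq> k" by blast
    then show ?thesis
    proof cases
      case 1
      then show ?thesis using far[of j1] j1 k1 by (simp add: W'_def)
    next
      case 2
      then show ?thesis using far[of k1] j1 k1 by (simp add: W'_def norm_minus_commute)
    next
      case 3
      have "rho_ovo K W \<le> ovo_dist K W k1" by (rule rho_ovo_le[OF k1(1)])
      also have "\<dots> \<le> norm (W k1 - W j1)" using k1 j1 by (intro ovo_le) auto
      finally show ?thesis using 3 k1 j1 drho by (simp add: W'_def)
    qed
  qed
  have rle: "rho_ovo K W' \<le> d" using T W'OB drho by (auto simp: argmax_on_def)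
  have T': "tammes_solution K W'" unfolding tammes_solution_def argmax_on_def
    using W'OB T rho' drho by (auto simp: argmax_on_def)
  obtain j2 where j2: "j2 < K" "j2 \<noteq> k" "ovo_dist K W' k = norm (W' k - W' j2)"
    using ovo_attain[OF K2, of k W'] by auto
  have "d < ovo_dist K W' k" using j2 far[of j2] by (simp add: W'_def)
  then have "ovo_rattler K W' k" using rle rho' k by (simp add: ovo_rattler_def)
  then show False using h4 T' by blast
qed


theorem mainTheorem8:
  fixes K n :: nat
  assumes "K \<ge> 2" and "n \<ge> 1"
    and "\<forall>W :: nat \<Rightarrow> real^'d. softmax_code K W \<longrightarrow> (\<forall>k. \<not> ovr_rattler K W k)"
    and "\<forall>W :: nat \<Rightarrow> real^'d. tammes_solution K W \<longrightarrow> (\<forall>k. \<not> ovo_rattler K W k)"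
  shows "(\<forall>(W :: nat \<Rightarrow> real^'d) H.
            W \<in> OB K \<and> H \<in> OB2 K n \<and>
            (\<forall>W' \<in> (OB K :: (nat \<Rightarrow> real^'d) set). \<forall>H' \<in> (OB2 K n :: (nat \<Rightarrow> nat \<Rightarrow> real^'d) set). L_HardMax K n W H \<le> L_HardMax K n W' H')
            \<longrightarrow> (\<forall>k<K. \<forall>i<n. H k i = W k))
       \<longleftrightarrow> argmax_on (OB K :: (nat \<Rightarrow> real^'d) set) (rho_ovr K) =
           argmax_on (OB K) (rho_ovo K)"
proof
  note K2 = assms(1) and n1 = assms(2) and h3 = assms(3) and h4 = assms(4)
  assume a: "\<forall>(W :: nat \<Rightarrow> real^'d) H.
            W \<in> OB K \<and> H \<in> OB2 K n \<and>
            (\<forall>W' \<in> (OB K :: (nat \<Rightarrow> real^'d) set). \<forall>H' \<in> (OB2 K n :: (nat \<Rightarrow> nat \<Rightarrow> real^'d) set). L_HardMax K n W H \<le> L_HardMax K n W' H')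
            \<longrightarrow> (\<forall>k<K. \<forall>i<n. H k i = W k)"
  have keyA: "2 * rho_ovr K W \<le> (rho_ovo K W)^2"
    if WS: "W \<in> argmax_on (OB K) (rho_ovr K)" for W :: "nat \<Rightarrow> real^'d"
  proof -
    define r where "r = rho_ovr K W"
    have r0: "0 < r" unfolding r_def by (rule pos[OF K2 h3 WS])
    have WOB: "W \<in> OB K" using WS by (simp add: argmax_on_def)
    have wn: "norm (W j) = 1" if "j < K" for j using WOB that by (simp add: OB_def)
    have "softmax_code K W" using WS by (simp add: softmax_code_def)
    then have nr: "ovr_dist K W k = r" if "k < K" for k
      using h3 that by (auto simp: ovr_rattler_def r_def)
    have pos': "\<forall>k<K. 0 < ovr_dist K W k" using nr r0 by simp
    obtain P H where P: "\<forall>k<K. P k \<in> convex hull (W ` ({..<K}-{k})) \<and> norm (W k - P k) = ovr_dist K W k \<and>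
        (\<forall>x \<in> convex hull (W ` ({..<K}-{k})). inner (W k - P k) (x - P k) \<le> 0)"
      and H: "H \<in> OB2 K n" "L_HardMax K n W H \<le> - rho_ovr K W" "\<forall>k<K. \<forall>i<n. H k i = sgn (W k - P k)"
      using UB[OF K2 n1, of W] pos' by blast
    have min: "\<forall>W' \<in> (OB K :: (nat \<Rightarrow> real^'d) set). \<forall>H' \<in> (OB2 K n :: (nat \<Rightarrow> nat \<Rightarrow> real^'d) set). L_HardMax K n W H \<le> L_HardMax K n W' H'"
    proof (intro ballI)
      fix W' :: "nat \<Rightarrow> real^'d" and H' :: "nat \<Rightarrow> nat \<Rightarrow> real^'d" assume W': "W' \<in> OB K" and H': "H' \<in> OB2 K n"
      have "rho_ovr K W' \<le> r" using WS W' by (auto simp: argmax_on_def r_def)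
      then show "L_HardMax K n W H \<le> L_HardMax K n W' H'"
        using H(2) LB'[OF K2 n1 H', of W'] by (simp add: r_def)
    qed
    have HW: "H k i = W k" if "k < K" "i < n" for k i
      using a[rule_format, OF conjI[OF WOB conjI[OF H(1) min]]] that by blast
    have pair: "2 * r \<le> (norm (W k - W j))^2" if kj: "k < K" "j < K" "j \<noteq> k" for k j
    proof -
      define u where "u = W k - P k"
      have nu: "norm u = r" using P nr kj by (simp add: u_def)
      have "H k 0 = W k" using HW kj n1 by simp
      moreover have "H k 0 = sgn u" using H(3) kj n1 by (simp add: u_def)
      ultimately have "sgn u = W k" by simp
      moreover have "u = norm u *\<^sub>R sgn u" using r0 nu by (simp add: sgn_div_norm)
      ultimately have uW: "u = r *\<^sub>R W k" using nu by simp
      have "W j \<in> convex hull (W ` ({..<K}-{k}))" using kj by (intro hull_inc) auto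
      then have "inner u (W j - P k) \<le> 0" using P kj by (simp add: u_def)
      moreover have "P k = W k - u" by (simp add: u_def)
      ultimately have "inner (r *\<^sub>R W k) (W j - W k + r *\<^sub>R W k) \<le> 0" using uW by (simp add: algebra_simps)
      moreover have "inner (W k) (W k) = 1" using wn[OF kj(1)] by (simp add: power2_norm_eq_inner[symmetric])
      ultimately have "r * (inner (W k) (W j) - 1 + r) \<le> 0"
        by (simp add: inner_add_right inner_diff_right algebra_simps)
      then have "inner (W k) (W j) - 1 + r \<le> 0" using r0 by (simp add: mult_le_0_iff)
      then show ?thesis using nd[of "W k" "W j"] wn kj by simp
    qed
    obtain k1 where k1: "k1 < K" "rho_ovo K W = ovo_dist K W k1" using rho_ovo_attain[of K W] K2 by auto
    obtain j1 where j1: "j1 < K" "j1 \<noteq> k1" "ovo_dist K W k1 = norm (W k1 - W j1)"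
      using ovo_attain[OF K2, of k1 W] by auto
    show ?thesis using pair[OF k1(1) j1(1,2)] k1 j1 by (simp add: r_def)
  qed
  obtain W0 :: "nat \<Rightarrow> real^'d" where W0: "W0 \<in> argmax_on (OB K) (rho_ovr K)" using exists_S[OF K2] by blast
  show "argmax_on (OB K :: (nat \<Rightarrow> real^'d) set) (rho_ovr K) = argmax_on (OB K) (rho_ovo K)"
  proof
    show "argmax_on (OB K :: (nat \<Rightarrow> real^'d) set) (rho_ovr K) \<subseteq> argmax_on (OB K) (rho_ovo K)"
    proof
      fix W :: "nat \<Rightarrow> real^'d" assume WS: "W \<in> argmax_on (OB K) (rho_ovr K)"
      have WOB: "W \<in> OB K" using WS by (simp add: argmax_on_def)
      have "rho_ovo K V \<le> rho_ovo K W" if V: "V \<in> OB K" for V :: "nat \<Rightarrow> real^'d"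
      proof -
        have "(rho_ovo K V)^2 \<le> 2 * rho_ovr K V" by (rule R[OF K2 V])
        also have "\<dots> \<le> 2 * rho_ovr K W" using WS V by (auto simp: argmax_on_def)
        also have "\<dots> \<le> (rho_ovo K W)^2" by (rule keyA[OF WS])
        finally show ?thesis using rho_ovo_nonneg[OF K2, of W] by (rule power2_le_imp_le)
      qed
      then show "W \<in> argmax_on (OB K) (rho_ovo K)" using WOB by (auto simp: argmax_on_def)
    qed
  next
    show "argmax_on (OB K) (rho_ovo K) \<subseteq> argmax_on (OB K :: (nat \<Rightarrow> real^'d) set) (rho_ovr K)"
    proof
      fix V :: "nat \<Rightarrow> real^'d" assume VT: "V \<in> argmax_on (OB K) (rho_ovo K)"
      have VOB: "V \<in> OB K" using VT by (simp add: argmax_on_def)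
      have W0OB: "W0 \<in> OB K" using W0 by (simp add: argmax_on_def)
      have "rho_ovr K U \<le> rho_ovr K V" if U: "U \<in> OB K" for U :: "nat \<Rightarrow> real^'d"
      proof -
        have "2 * rho_ovr K U \<le> 2 * rho_ovr K W0" using W0 U by (auto simp: argmax_on_def)
        also have "\<dots> \<le> (rho_ovo K W0)^2" by (rule keyA[OF W0])
        also have "\<dots> \<le> (rho_ovo K V)^2"
          using VT W0OB rho_ovo_nonneg[OF K2, of W0] by (auto simp: argmax_on_def intro!: power_mono)
        also have "\<dots> \<le> 2 * rho_ovr K V" by (rule R[OF K2 VOB])
        finally show ?thesis by simp
      qed
      then show "V \<in> argmax_on (OB K) (rho_ovr K)" using VOB by (auto simp: argmax_on_def)
    qed
  qed
next
  note K2 = assms(1) and n1 = assms(2) and h3 = assms(3) and h4 = assms(4)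
  assume b: "argmax_on (OB K :: (nat \<Rightarrow> real^'d) set) (rho_ovr K) = argmax_on (OB K) (rho_ovo K)"
  show "\<forall>(W :: nat \<Rightarrow> real^'d) H.
            W \<in> OB K \<and> H \<in> OB2 K n \<and>
            (\<forall>W' \<in> (OB K :: (nat \<Rightarrow> real^'d) set). \<forall>H' \<in> (OB2 K n :: (nat \<Rightarrow> nat \<Rightarrow> real^'d) set). L_HardMax K n W H \<le> L_HardMax K n W' H')
            \<longrightarrow> (\<forall>k<K. \<forall>i<n. H k i = W k)"
  proof (rule allI, rule allI, rule impI)
    fix W :: "nat \<Rightarrow> real^'d" and H :: "nat \<Rightarrow> nat \<Rightarrow> real^'d"
    assume WH: "W \<in> OB K \<and> H \<in> OB2 K n \<and>
            (\<forall>W' \<in> (OB K :: (nat \<Rightarrow> real^'d) set). \<forall>H' \<in> (OB2 K n :: (nat \<Rightarrow> nat \<Rightarrow> real^'d) set). L_HardMax K n W H \<le> L_HardMax K n W' H')"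
    then have WOB: "W \<in> OB K" and HOB: "H \<in> OB2 K n"
      and minL: "\<And>W' H'. W' \<in> (OB K :: (nat \<Rightarrow> real^'d) set) \<Longrightarrow> H' \<in> (OB2 K n :: (nat \<Rightarrow> nat \<Rightarrow> real^'d) set) \<Longrightarrow> L_HardMax K n W H \<le> L_HardMax K n W' H'"
      by auto
    have wn: "norm (W j) = 1" if "j < K" for j using WOB that by (simp add: OB_def)
    obtain W0 :: "nat \<Rightarrow> real^'d" where W0: "W0 \<in> argmax_on (OB K) (rho_ovr K)" using exists_S[OF K2] by blast
    have W0OB: "W0 \<in> OB K" using W0 by (simp add: argmax_on_def)
    define r where "r = rho_ovr K W0"
    have r0: "0 < r" unfolding r_def by (rule pos[OF K2 h3 W0])
    have "\<forall>k<K. 0 < ovr_dist K W0 k" using r0 rho_ovr_le[of _ K W0] by (force simp: r_def)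
    then obtain P0 H0 where H0: "H0 \<in> OB2 K n" "L_HardMax K n W0 H0 \<le> - rho_ovr K W0"
      using UB[OF K2 n1, of W0] by metis
    have LWH: "L_HardMax K n W H \<le> - r" using minL[OF W0OB H0(1)] H0(2) by (simp add: r_def)
    have "- rho_ovr K W \<le> L_HardMax K n W H" by (rule LB'[OF K2 n1 HOB])
    then have rW: "r \<le> rho_ovr K W" using LWH by simp
    have WS: "W \<in> argmax_on (OB K) (rho_ovr K)"
      using W0 WOB rW by (force simp: argmax_on_def r_def)
    then have rWe: "rho_ovr K W = r" using W0 WOB rW by (force simp: argmax_on_def r_def)
    have "softmax_code K W" using WS by (simp add: softmax_code_def)
    then have nr: "ovr_dist K W k = r" if "k < K" for k
      using h3 that rWe by (auto simp: ovr_rattler_def)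
    have WT: "W \<in> argmax_on (OB K) (rho_ovo K)" using WS b by simp
    show "\<forall>k<K. \<forall>i<n. H k i = W k"
    proof (intro allI impI)
      fix k i assume k: "k < K" and i: "i < n"
      define h where "h = H k i"
      have hn: "norm h = 1" using HOB k i by (simp add: OB2_def h_def)
      define c where "c = 1 - (ovo_dist K W k)^2 / 2"
      have cin: "c *\<^sub>R W k \<in> convex hull (W ` ({..<K} - {k}))"
        unfolding c_def by (rule tammes_key[OF K2 WT h4 k])
      have "inner (c *\<^sub>R W k) h \<le> - r + inner (W k) h"
      proof (rule hull_halfspace[OF _ cin])
        fix g assume "g \<in> W ` ({..<K} - {k})"
        then obtain j where j: "j < K" "j \<noteq> k" "g = W j" by auto
        have "inner (W j - W k) h \<le> L_HardMax K n W H" unfolding h_def by (rule L_ge[OF k i j(1,2)])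
        then show "inner g h \<le> - r + inner (W k) h" using LWH j by (simp add: inner_diff_left)
      qed
      then have A: "(1 - c) * inner (W k) h \<ge> r" by (simp add: algebra_simps)
      have "(ovo_dist K W k)^2 / 2 \<le> ovr_dist K W k" by (rule ovr_ge_ovo[OF K2 WOB k])
      then have B: "1 - c \<le> r" using nr[OF k] by (simp add: c_def)
      have C: "0 \<le> 1 - c" by (simp add: c_def)
      have pc: "1 - c > 0"
      proof (rule ccontr)
        assume "\<not> 1 - c > 0"
        then have "1 - c = 0" using C by simp
        then show False using A r0 by simp
      qed
      have "(1 - c) * 1 \<le> (1 - c) * inner (W k) h" using A B by simp
      then have x1: "inner (W k) h \<ge> 1" using pc by (simp only: mult_le_cancel_left_pos)
      have "(norm (h - W k))^2 = 2 - 2 * inner h (W k)" using nd[of h "W k"] hn wn[OF k] by simp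
      also have "\<dots> \<le> 0" using x1 by (simp add: inner_commute)
      finally have "norm (h - W k) = 0" by (simp add: power2_eq_square mult_le_0_iff)
      then show "H k i = W k" by (simp add: h_def)
    qed
  qed
qed

end
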